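(* Let $S$ be a finite inverse semigroup. Then a $\mathscr J$-class $J$ of $S$ is $\mathsf{RM}$-irreducible if and only if all its elements are join irreducible in the natural partial order on $S$. Moreover, for a $\mathscr J$-class $J$ with idempotent $e_J\in J$ and maximal subgroup $G_J$ at $e_J$, we have $M_J=\{g\in G_J\mid \text{for all } f\in S,\ f<e_J\implies f<g\}$.
   Context: In an inverse semigroup every $\mathscr J$-class is regular; $\mathscr J$-classes are ordered by $J'\le J$ iff $S^1J'S^1\subseteq S^1JS^1$. For a $\mathscr J$-class $J$: $s\equiv_{\mathsf{RM},J}t$ iff for all $x\in J$, $xs\in J\iff xt\in J$, and if both lie in $J$ then $xs=xt$. $J$ is $\mathsf{RM}$-irreducible if $\bigcap_{J'<J}\equiv_{\mathsf{RM},J'}\not\subseteq\equiv_{\mathsf{RM},J}$ (the empty intersection is the universal relation). $M_J=\{g\in G_J\mid g\equiv_{\mathsf{RM},J'}e_J\text{ for all } J'<J\}$. The natural partial order is $s\le t$ iff $s=et$ for some idempotent $e$. An element $s$ is join reducible if it is the least upper bound in the natural partial order of some set of elements strictly below it (the least upper bound of the empty set being a minimum element of $S$, if one exists), and join irreducible otherwise. *)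

theory Defs
  imports Main
begin

text \<open>Semigroups are modelled by the type class semigroup_mult; the semigroup S is the
  whole type (UNIV).\<close>

definition inverse_semigroup_ax :: "'a::semigroup_mult itself \<Rightarrow> bool" where
  "inverse_semigroup_ax _ \<longleftrightarrow> (\<forall>s::'a. \<exists>!t. s * t * s = s \<and> t * s * t = t)"

definition idem :: "'a::semigroup_mult \<Rightarrow> bool" where
  "idem e \<longleftrightarrow> e * e = e"

definition ideal1 :: "'a::semigroup_mult \<Rightarrow> 'a set" where
  "ideal1 s = {s} \<union> {x * s | x. True} \<union> {s * y | y. True} \<union> {x * s * y | x y. True}"

definition rideal1 :: "'a::semigroup_mult \<Rightarrow> 'a set" where
  "rideal1 s = {s} \<union> {s * y | y. True}"

definition lideal1 :: "'a::semigroup_mult \<Rightarrow> 'a set" where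
  "lideal1 s = {s} \<union> {x * s | x. True}"

definition ideal1_set :: "'a::semigroup_mult set \<Rightarrow> 'a set" where
  "ideal1_set A = (\<Union>a\<in>A. ideal1 a)"

definition Jclass :: "'a::semigroup_mult \<Rightarrow> 'a set" where
  "Jclass s = {t. ideal1 t = ideal1 s}"

definition is_Jclass :: "'a::semigroup_mult set \<Rightarrow> bool" where
  "is_Jclass J \<longleftrightarrow> (\<exists>s. J = Jclass s)"

definition Jless :: "'a::semigroup_mult set \<Rightarrow> 'a set \<Rightarrow> bool" where
  "Jless J' J \<longleftrightarrow> ideal1_set J' \<subseteq> ideal1_set J \<and> J' \<noteq> J"

definition rm_equiv :: "'a::semigroup_mult set \<Rightarrow> 'a \<Rightarrow> 'a \<Rightarrow> bool" where
  "rm_equiv J s t \<longleftrightarrow> (\<forall>x\<in>J. (x * s \<in> J \<longleftrightarrow> x * t \<in> J) \<and>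
                                 (x * s \<in> J \<and> x * t \<in> J \<longrightarrow> x * s = x * t))"

definition RM_irreducible :: "'a::semigroup_mult set \<Rightarrow> bool" where
  "RM_irreducible J \<longleftrightarrow>
     (\<exists>s t. (\<forall>J'. is_Jclass J' \<and> Jless J' J \<longrightarrow> rm_equiv J' s t) \<and> \<not> rm_equiv J s t)"

definition nat_le :: "'a::semigroup_mult \<Rightarrow> 'a \<Rightarrow> bool" where
  "nat_le s t \<longleftrightarrow> (\<exists>e. idem e \<and> s = e * t)"

definition nat_less :: "'a::semigroup_mult \<Rightarrow> 'a \<Rightarrow> bool" where
  "nat_less s t \<longleftrightarrow> nat_le s t \<and> s \<noteq> t"

definition is_lub :: "'a::semigroup_mult \<Rightarrow> 'a set \<Rightarrow> bool" where
  "is_lub s X \<longleftrightarrow> (\<forall>x\<in>X. nat_le x s) \<and> (\<forall>u. (\<forall>x\<in>X. nat_le x u) \<longrightarrow> nat_le s u)"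

definition join_reducible :: "'a::semigroup_mult \<Rightarrow> bool" where
  "join_reducible s \<longleftrightarrow> (\<exists>X. (\<forall>x\<in>X. nat_less x s) \<and> is_lub s X)"

definition join_irreducible :: "'a::semigroup_mult \<Rightarrow> bool" where
  "join_irreducible s \<longleftrightarrow> \<not> join_reducible s"

text \<open>Maximal subgroup at an idempotent e: its H-class.\<close>
definition Hclass :: "'a::semigroup_mult \<Rightarrow> 'a set" where
  "Hclass e = {g. rideal1 g = rideal1 e \<and> lideal1 g = lideal1 e}"

definition M_J :: "'a::semigroup_mult set \<Rightarrow> 'a \<Rightarrow> 'a set" where
  "M_J J e = {g \<in> Hclass e. \<forall>J'. is_Jclass J' \<and> Jless J' J \<longrightarrow> rm_equiv J' g e}"

end

theory Submission
  imports Defs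
begin

definition sinv :: "'a::semigroup_mult \<Rightarrow> 'a" where
  "sinv s = (THE t. s * t * s = s \<and> t * s * t = t)"

locale invsg =
  fixes T :: "'a::{finite,semigroup_mult} itself"
  assumes ax: "inverse_semigroup_ax T"
begin

lemma ex1: "\<exists>!t. s * t * s = s \<and> t * s * t = (t::'a)"
  using ax unfolding inverse_semigroup_ax_def by blast

lemma sinv1: "s * sinv s * s = (s::'a)"
  and sinv2: "sinv s * s * sinv s = (sinv s::'a)"
  using theI'[OF ex1[of s]] unfolding sinv_def by auto

lemma sinv_unique: "s * t * s = s \<Longrightarrow> t * s * t = t \<Longrightarrow> sinv s = (t::'a)"
  unfolding sinv_def by (rule the1_equality[OF ex1]) auto

lemma idem_sinv: "idem (e::'a) \<Longrightarrow> sinv e = e"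
  unfolding idem_def by (rule sinv_unique) auto

lemma idem_mult: assumes "idem (e::'a)" "idem f" shows "idem (e * f)"
proof -
  have ee: "e * e = e" and ff: "f * f = f" using assms unfolding idem_def by auto
  define x where "x = sinv (e * f)"
  have "sinv (e * f) = f * x * e"
  proof (rule sinv_unique)
    have "e * f * (f * x * e) * (e * f) = e * f * x * (e * f)"
      by (simp add: mult.assoc ee ff flip: mult.assoc[of f f] mult.assoc[of e e])
    also have "\<dots> = e * f" unfolding x_def by (rule sinv1)
    finally show "e * f * (f * x * e) * (e * f) = e * f" .
    have "f * x * e * (e * f) * (f * x * e) = f * (x * (e * f) * x) * e"
      by (simp add: mult.assoc ee ff flip: mult.assoc[of f f] mult.assoc[of e e])
    also have "x * (e * f) * x = x" unfolding x_def by (rule sinv2)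
    finally show "f * x * e * (e * f) * (f * x * e) = f * x * e" by (simp add: mult.assoc)
  qed
  hence xx: "x = f * x * e" using x_def by simp
  have "x * x = f * (x * (e * f) * x) * e"
    by (subst (1 2) xx) (simp add: mult.assoc)
  also have "x * (e * f) * x = x" unfolding x_def by (rule sinv2)
  finally have "x * x = x" using xx by (simp add: mult.assoc)
  hence "sinv x = x" by (intro idem_sinv) (simp add: idem_def)
  moreover have "sinv x = e * f"
    by (rule sinv_unique) (use sinv1[of "e*f"] sinv2[of "e*f"] in \<open>simp_all add: x_def\<close>)
  ultimately show ?thesis using \<open>x * x = x\<close> by (simp add: idem_def)
qed

lemma idem_comm: assumes "idem (e::'a)" "idem f" shows "e * f = f * e"
proof -
  have ee: "e * e = e" and ff: "f * f = f" using assms unfolding idem_def by auto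
  have ef: "e * f * (e * f) = e * f" using idem_mult[OF assms] by (simp add: idem_def)
  have fe: "f * e * (f * e) = f * e" using idem_mult[OF assms(2,1)] by (simp add: idem_def)
  have "sinv (e * f) = f * e"
  proof (rule sinv_unique)
    show "e * f * (f * e) * (e * f) = e * f"
      using ef by (simp add: mult.assoc ee ff flip: mult.assoc[of f f] mult.assoc[of e e])
    show "f * e * (e * f) * (f * e) = f * e"
      using fe by (simp add: mult.assoc ee ff flip: mult.assoc[of f f] mult.assoc[of e e])
  qed
  moreover have "sinv (e * f) = e * f" using ef by (intro idem_sinv) (simp add: idem_def)
  ultimately show ?thesis by simp
qed


lemma idem_eq: "idem e \<Longrightarrow> e * e = (e::'a)" by (simp add: idem_def)

lemma idem_l: "idem (s * sinv (s::'a))"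
  unfolding idem_def by (metis sinv1 mult.assoc)
lemma idem_r: "idem (sinv s * (s::'a))"
  unfolding idem_def by (metis sinv1 mult.assoc)

lemma sinv_sinv: "sinv (sinv s) = (s::'a)"
  by (rule sinv_unique) (simp_all add: sinv1 sinv2)

lemma sinv1x: "s * (sinv s * (s * x)) = (s::'a) * x"
  by (metis sinv1 mult.assoc)
lemma sinv2x: "sinv s * (s * (sinv s * x)) = sinv (s::'a) * x"
  by (metis sinv2 mult.assoc)
lemma sinv1': "s * (sinv s * s) = (s::'a)"
  by (metis sinv1 mult.assoc)
lemma sinv2': "sinv s * (s * sinv s) = sinv (s::'a)"
  by (metis sinv2 mult.assoc)
lemma idemx: "idem e \<Longrightarrow> e * (e * x) = (e::'a) * x"
  by (metis idem_eq mult.assoc)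

lemma comm_x: "idem e \<Longrightarrow> idem f \<Longrightarrow> e * (f * x) = f * (e * (x::'a))"
  by (metis idem_comm mult.assoc)

lemma sinv_mult: "sinv (s * t) = sinv t * sinv (s::'a)"
proof (rule sinv_unique)
  have "s * t * (sinv t * sinv s) * (s * t) = s * (t * (sinv t * (sinv s * (s * t))))"
    by (simp add: mult.assoc)
  also have "\<dots> = s * (sinv s * (s * (t * (sinv t * t))))"
    using comm_x[OF idem_l idem_r, of t s t] by (simp add: mult.assoc)
  finally show "s * t * (sinv t * sinv s) * (s * t) = s * t" by (simp add: sinv1x sinv1')
  have "sinv t * sinv s * (s * t) * (sinv t * sinv s) = sinv t * (sinv s * (s * (t * (sinv t * sinv s))))"
    by (simp add: mult.assoc)
  also have "\<dots> = sinv t * (t * (sinv t * (sinv s * (s * sinv s))))"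
    using comm_x[OF idem_l idem_r, of t s "sinv s"] by (simp add: mult.assoc)
  finally show "sinv t * sinv s * (s * t) * (sinv t * sinv s) = sinv t * sinv s" by (simp add: sinv2x sinv2')
qed

lemma nle_iff: "nat_le s t \<longleftrightarrow> s = s * sinv s * (t::'a)"
proof
  assume "nat_le s t"
  then obtain g where g: "idem g" "s = g * t" unfolding nat_le_def by blast
  have "s * sinv s * t = g * (t * (sinv t * (g * t)))"
    by (simp add: g sinv_mult idem_sinv mult.assoc)
  also have "\<dots> = g * (g * (t * (sinv t * t)))" using comm_x[OF idem_l g(1), of t t] by (simp add: mult.assoc)
  also have "\<dots> = s" using g by (simp add: idemx sinv1')
  finally show "s = s * sinv s * t" by simp
next
  assume "s = s * sinv s * t" thus "nat_le s t" unfolding nat_le_def using idem_l by blast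
qed

lemma nle_idem: "idem f \<Longrightarrow> nat_le f w \<Longrightarrow> f = f * (w::'a)"
  by (simp add: nle_iff idem_sinv idem_eq)

lemma nle_idemI: "idem f \<Longrightarrow> f = f * (w::'a) \<Longrightarrow> nat_le f w"
  unfolding nat_le_def by blast

lemma nle_trans: "nat_le s t \<Longrightarrow> nat_le t u \<Longrightarrow> nat_le s (u::'a)"
  unfolding nat_le_def by (metis idem_mult mult.assoc)

lemma nle_refl: "nat_le s (s::'a)"
  using nle_iff sinv1 by metis

lemma nle_mult_right: "nat_le s t \<Longrightarrow> nat_le (s * c) (t * (c::'a))"
  unfolding nat_le_def by (metis mult.assoc)

lemma idem_conj: "idem g \<Longrightarrow> idem (c * g * sinv (c::'a))"
proof -
  assume g: "idem g"
  have "c * g * sinv c * (c * g * sinv c) = c * (g * (sinv c * (c * (g * sinv c))))"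
    by (simp add: mult.assoc)
  also have "\<dots> = c * (sinv c * (c * (g * (g * sinv c))))"
    using comm_x[OF g idem_r, of c "g * sinv c"] by (simp add: mult.assoc)
  also have "\<dots> = c * g * sinv c" using g by (simp add: sinv1x idemx mult.assoc)
  finally show ?thesis unfolding idem_def .
qed

lemma nle_mult_left: assumes "nat_le s t" shows "nat_le (c * s) (c * (t::'a))"
proof -
  obtain g where g: "idem g" "s = g * t" using assms unfolding nat_le_def by blast
  have "c * g * sinv c * (c * t) = c * (g * (sinv c * (c * t)))" by (simp add: mult.assoc)
  also have "\<dots> = c * (sinv c * (c * (g * t)))" using comm_x[OF g(1) idem_r, of c t] by (simp add: mult.assoc)
  also have "\<dots> = c * s" using g by (simp add: sinv1x)
  finally show ?thesis unfolding nat_le_def using idem_conj[OF g(1)] by metis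
qed

lemma nle_idem_below: "nat_le s e \<Longrightarrow> idem e \<Longrightarrow> idem (s::'a)"
  unfolding nat_le_def using idem_mult by blast

lemma nle_mult_idem: assumes "idem g" shows "nat_le (w * g) (w::'a)"
proof -
  have "w * g * sinv w * w = w * (g * (sinv w * w))" by (simp add: mult.assoc)
  also have "\<dots> = w * (sinv w * (w * g))" using idem_comm[OF assms idem_r, of w] by (simp add: mult.assoc)
  also have "\<dots> = w * g" by (simp add: sinv1x)
  finally show ?thesis unfolding nat_le_def using idem_conj[OF assms] by metis
qed

lemma nle_sinv_mult: "nat_le v s \<Longrightarrow> sinv v * s = sinv v * (v::'a)"
  by (metis nle_iff sinv2 mult.assoc)


lemma ideal1_mem: "x \<in> ideal1 s \<longleftrightarrow> (\<exists>p q. x = p * (s::'a) * q)"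
proof
  assume "x \<in> ideal1 s"
  then consider "x = s" | a where "x = a * s" | b where "x = s * b" | a b where "x = a * s * b"
    unfolding ideal1_def by blast
  thus "\<exists>p q. x = p * s * q"
  proof cases
    case 1 thus ?thesis by (metis sinv1 mult.assoc)
  next
    case 2 thus ?thesis by (metis sinv1 mult.assoc)
  next
    case 3 thus ?thesis by (metis sinv1 mult.assoc)
  qed blast
next
  assume "\<exists>p q. x = p * s * q" thus "x \<in> ideal1 s" unfolding ideal1_def by blast
qed

lemma ideal1_trans: "x \<in> ideal1 y \<Longrightarrow> y \<in> ideal1 z \<Longrightarrow> x \<in> ideal1 (z::'a)"
  unfolding ideal1_mem by (metis mult.assoc)

lemma ideal1_self: "s \<in> ideal1 (s::'a)" unfolding ideal1_def by blast
lemma ideal1_l: "a * s \<in> ideal1 (s::'a)" unfolding ideal1_def by blast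
lemma ideal1_r: "s * b \<in> ideal1 (s::'a)" unfolding ideal1_def by blast
lemma ideal1_lr: "a * s * b \<in> ideal1 (s::'a)" unfolding ideal1_def by blast

lemma ideal1_sub: "x \<in> ideal1 y \<Longrightarrow> ideal1 x \<subseteq> ideal1 (y::'a)"
  using ideal1_trans by blast

lemma ideal1_eqI: "x \<in> ideal1 y \<Longrightarrow> y \<in> ideal1 x \<Longrightarrow> ideal1 x = ideal1 (y::'a)"
  using ideal1_sub by blast

lemma ideal1_eqD: "ideal1 x = ideal1 (y::'a) \<Longrightarrow> x \<in> ideal1 y"
  using ideal1_self by blast

end

fun pw :: "'a::semigroup_mult \<Rightarrow> nat \<Rightarrow> 'a" where
  "pw c 0 = c" | "pw c (Suc n) = c * pw c n"

lemma pw_add: "pw c (Suc (m + n)) = pw c m * pw c n"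
  by (induction m) (simp_all add: mult.assoc)

lemma pw_Suc': "pw c (Suc n) = pw c n * c"
  using pw_add[of c n 0] by simp

lemma pw_period:
  assumes "i < j" "pw c i = pw c j" "i < m"
  shows "pw c m = pw c (m + q * (j - i))"
proof (induction q)
  case 0 thus ?case by simp
next
  case (Suc q)
  define m' where "m' = m + q * (j - i)"
  have "m' = Suc ((m' - i - 1) + i)" using assms unfolding m'_def by simp
  hence "pw c m' = pw c (Suc ((m' - i - 1) + j))" using assms(2) pw_add by metis
  also have "Suc ((m' - i - 1) + j) = m + Suc q * (j - i)" using assms unfolding m'_def by simp
  finally show ?case using Suc m'_def by simp
qed

lemma idem_pow: "\<exists>n. idem (pw (c::'a::{finite,semigroup_mult}) n)"
proof -
  have "\<not> inj (pw c)"
  proof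
    assume "inj (pw c)"
    hence "finite (UNIV :: nat set)" using finite_imageD[of "pw c" UNIV] by simp
    thus False by simp
  qed
  then obtain i j where ij: "i \<noteq> j" "pw c i = pw c j" unfolding inj_def by blast
  obtain i j where ij: "i < j" "pw c i = pw c j"
    using ij by (metis linorder_neqE_nat)
  define p where "p = j - i"
  define N where "N = (i + 2) * p - 1"
  have p: "p \<ge> 1" using ij p_def by simp
  have N1: "Suc N = (i + 2) * p" unfolding N_def using p by (simp add: algebra_simps)
  have "i + 2 \<le> (i + 2) * p" using mult_le_mono2[OF p, of "i + 2"] by simp
  hence Ni: "i < N" unfolding N_def by linarith
  have "pw c N * pw c N = pw c (Suc (N + N))" by (rule pw_add[symmetric])
  also have "Suc (N + N) = N + (i + 2) * p" using N1 by simp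
  also have "pw c \<dots> = pw c N" using pw_period[OF ij Ni, of "i + 2"] unfolding p_def by (rule sym)
  finally show ?thesis unfolding idem_def by blast
qed

context invsg begin

lemma stab:
  assumes e: "idem (e::'a)" and f: "idem f" and ef: "e * f = e" and fe: "f \<in> ideal1 e"
  shows "e = f"
proof -
  obtain a b where fab: "a * e * b = f" using fe ideal1_mem by metis
  define c where "c = a * e"
  have cfb: "c * f * b = f"
  proof -
    have "c * f * b = a * (e * f) * b" by (simp add: c_def mult.assoc)
    also have "\<dots> = f" by (simp only: ef fab)
    finally show ?thesis .
  qed
  have key: "pw c k * f * pw b k = f" for k
  proof (induction k)
    case 0 show ?case using cfb by simp
  next
    case (Suc k)
    have h1: "pw c (Suc k) = pw c k * c" by (rule pw_Suc')
    have h2: "pw b (Suc k) = b * pw b k" by simp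
    have "pw c (Suc k) * f * pw b (Suc k) = pw c k * (c * f * b) * pw b k"
      unfolding h1 h2 by (simp add: mult.assoc)
    also have "\<dots> = pw c k * f * pw b k" by (simp only: cfb)
    also have "\<dots> = f" by (rule Suc.IH)
    finally show ?case .
  qed
  obtain n where g: "idem (pw c n)" using idem_pow by blast
  define g where "g = pw c n"
  have ig: "idem g" using g g_def by simp
  have ge: "g * e = g"
  proof (cases n)
    case 0 thus ?thesis using e by (simp add: g_def c_def mult.assoc idem_eq)
  next
    case (Suc m) thus ?thesis using e by (simp add: g_def c_def pw_Suc' mult.assoc idemx idem_eq del: pw.simps)
  qed
  have k: "g * f * pw b n = f" using key[of n] by (simp add: g_def)
  have "g * f = g * (g * f * pw b n)" by (simp only: k)
  also have "\<dots> = g * f * pw b n" using ig by (simp add: idemx mult.assoc)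
  also have "\<dots> = f" by (rule k)
  finally have fgf: "g * f = f" .
  have fe': "f * e = e" using idem_comm[OF e f] ef by metis
  have "f * e = g" by (metis fgf fe' ge mult.assoc)
  hence "e = g" using fe' by simp
  thus ?thesis using fgf ef by (metis idem_comm[OF e f])
qed

lemma nle_Jeq: assumes "nat_le v u" "ideal1 v = ideal1 (u::'a)" shows "v = u"
proof -
  define e where "e = v * sinv v"
  define f where "f = u * sinv u"
  have ie: "idem e" and if': "idem f" unfolding e_def f_def by (rule idem_l)+
  have veu: "v = e * u" using assms(1) nle_iff e_def by metis
  have "e = v * sinv v" by (rule e_def)
  also have "\<dots> = e * u * sinv (e * u)" by (simp only: veu[symmetric])
  also have "\<dots> = e * f * e" by (simp add: sinv_mult idem_sinv[OF ie] f_def mult.assoc)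
  also have "\<dots> = e * f" by (metis idem_comm[OF ie if'] idem_eq[OF ie] mult.assoc)
  finally have ef: "e * f = e" by simp
  have "f \<in> ideal1 e"
  proof -
    have "f \<in> ideal1 u" unfolding f_def by (rule ideal1_r)
    moreover have "u \<in> ideal1 v" using assms(2) ideal1_self by blast
    moreover have "v \<in> ideal1 e" using ideal1_r[of e v] by (simp add: e_def sinv1)
    ultimately show ?thesis using ideal1_trans by blast
  qed
  hence "e = f" using stab[OF ie if' ef] by simp
  thus ?thesis using veu f_def by (simp add: sinv1)
qed

lemma Rstab: assumes "ideal1 (x * s) = ideal1 (x::'a)"
  shows "x * s * sinv (x * s) = x * sinv x"
proof -
  define E where "E = x * s * sinv (x * s)"
  define F where "F = x * sinv x"
  have iE: "idem E" and iF: "idem F" unfolding E_def F_def by (rule idem_l)+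
  have "E * F = x * (s * (sinv s * (sinv x * (x * sinv x))))"
    by (simp add: E_def F_def sinv_mult mult.assoc)
  also have "\<dots> = E" by (simp add: E_def sinv2' sinv_mult mult.assoc)
  finally have EF: "E * F = E" .
  have "F \<in> ideal1 E"
  proof -
    have "F \<in> ideal1 x" unfolding F_def by (rule ideal1_r)
    moreover have "x \<in> ideal1 (x * s)" using assms ideal1_self by blast
    moreover have "x * s \<in> ideal1 E" using ideal1_r[of E "x * s"] by (simp add: E_def sinv1)
    ultimately show ?thesis using ideal1_trans by blast
  qed
  thus ?thesis using stab[OF iE iF EF] E_def F_def by simp
qed

lemma D_exists:
  assumes e: "idem (e::'a)" and f: "idem f" and J: "ideal1 e = ideal1 f"
  shows "\<exists>y. y * sinv y = e \<and> sinv y * y = f"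
proof -
  obtain p q where epq: "e = p * f * q" using J ideal1_self ideal1_mem by blast
  define y where "y = e * p * f"
  define z where "z = f * q * e"
  have "y * z = e * (p * f * q) * e" using f by (simp add: y_def z_def mult.assoc idemx)
  hence yz: "y * z = e" using epq e by (simp add: idem_eq)
  have ey: "e * y = y" using e by (simp add: y_def mult.assoc idemx)
  have yyi: "idem (y * sinv y)" by (rule idem_l)
  have 1: "y * sinv y * e = e" using yz by (metis sinv1 mult.assoc)
  have 2: "e * (y * sinv y) = y * sinv y" using ey by (metis mult.assoc)
  have yy: "y * sinv y = e" using 1 2 idem_comm[OF e yyi] by simp
  define g where "g = sinv y * y"
  have ig: "idem g" unfolding g_def by (rule idem_r)
  have "y * f = y" using f by (simp add: y_def mult.assoc idemx idem_eq)
  hence gf: "g * f = g" by (simp add: g_def mult.assoc)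
  have "f \<in> ideal1 g"
  proof -
    have "f \<in> ideal1 e" using J ideal1_self by blast
    moreover have "e \<in> ideal1 y" using yy ideal1_r by metis
    moreover have "y \<in> ideal1 g" using ideal1_l[of y g] by (simp add: g_def sinv1 flip: mult.assoc)
    ultimately show ?thesis using ideal1_trans by blast
  qed
  hence "g = f" using stab[OF ig f gf] by simp
  thus ?thesis using yy g_def by blast
qed


lemma nle_right_id: "nat_le x a \<Longrightarrow> x * (sinv a * (a::'a)) = x"
  unfolding nat_le_def by (auto simp: mult.assoc sinv1')

lemma nle_left_id: assumes "nat_le x a" shows "a * (sinv a * (x::'a)) = x"
proof -
  have x: "x * sinv x * a = x" using assms nle_iff by metis
  have "a * (sinv a * x) = a * (sinv a * (x * sinv x * a))" by (simp only: x)
  also have "\<dots> = x * (sinv x * (a * (sinv a * a)))"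
    using comm_x[OF idem_l idem_l, of a x a] by (simp add: mult.assoc)
  also have "\<dots> = x * sinv x * a" by (simp add: sinv1' mult.assoc)
  also have "\<dots> = x" by (rule x)
  finally show ?thesis .
qed

lemma transfer_right:
  assumes jr: "join_reducible a" and ab: "sinv a * a = b * sinv (b::'a)"
  shows "join_reducible (a * b)"
proof -
  obtain X where X: "\<forall>x\<in>X. nat_less x a" "is_lub a X" using jr unfolding join_reducible_def by blast
  have xid: "x * b * sinv b = x" if "nat_le x a" for x
    using nle_right_id[OF that] ab by (simp add: mult.assoc)
  have aid: "a * b * sinv b = a" using xid nle_refl by blast
  show ?thesis unfolding join_reducible_def
  proof (intro exI[of _ "(\<lambda>x. x * b) ` X"] conjI)
    show "\<forall>y\<in>(\<lambda>x. x * b) ` X. nat_less y (a * b)"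
    proof
      fix y assume "y \<in> (\<lambda>x. x * b) ` X"
      then obtain x where x: "x \<in> X" "y = x * b" by blast
      have le: "nat_le x a" "x \<noteq> a" using X(1) x(1) unfolding nat_less_def by auto
      have "x * b \<noteq> a * b" using xid[OF le(1)] aid le(2) by metis
      thus "nat_less y (a * b)" using nle_mult_right[OF le(1)] x unfolding nat_less_def by simp
    qed
    show "is_lub (a * b) ((\<lambda>x. x * b) ` X)"
      unfolding is_lub_def
    proof (intro conjI allI impI ballI)
      fix y assume "y \<in> (\<lambda>x. x * b) ` X"
      then obtain x where x: "x \<in> X" "y = x * b" by blast
      thus "nat_le y (a * b)" using X(2) nle_mult_right unfolding is_lub_def by blast
    next
      fix w assume w: "\<forall>y\<in>(\<lambda>x. x * b) ` X. nat_le y w"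
      have "nat_le x (w * sinv b)" if "x \<in> X" for x
      proof -
        have "nat_le (x * b * sinv b) (w * sinv b)" using w that nle_mult_right by blast
        thus ?thesis using xid X(2) that unfolding is_lub_def by simp
      qed
      hence "nat_le a (w * sinv b)" using X(2) unfolding is_lub_def by blast
      hence "nat_le (a * b) (w * sinv b * b)" by (rule nle_mult_right)
      moreover have "nat_le (w * sinv b * b) w" using nle_mult_idem[OF idem_r, of w b] by (simp add: mult.assoc)
      ultimately show "nat_le (a * b) w" by (rule nle_trans)
    qed
  qed
qed

lemma transfer_left:
  assumes jr: "join_reducible a" and ab: "a * sinv a = sinv b * (b::'a)"
  shows "join_reducible (b * a)"
proof -
  obtain X where X: "\<forall>x\<in>X. nat_less x a" "is_lub a X" using jr unfolding join_reducible_def by blast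
  have xid: "sinv b * (b * x) = x" if "nat_le x a" for x
    using nle_left_id[OF that] ab by (metis mult.assoc)
  have aid: "sinv b * (b * a) = a" using xid nle_refl by blast
  show ?thesis unfolding join_reducible_def
  proof (intro exI[of _ "(\<lambda>x. b * x) ` X"] conjI)
    show "\<forall>y\<in>(\<lambda>x. b * x) ` X. nat_less y (b * a)"
    proof
      fix y assume "y \<in> (\<lambda>x. b * x) ` X"
      then obtain x where x: "x \<in> X" "y = b * x" by blast
      have le: "nat_le x a" "x \<noteq> a" using X(1) x(1) unfolding nat_less_def by auto
      have "b * x \<noteq> b * a" using xid[OF le(1)] aid le(2) by metis
      thus "nat_less y (b * a)" using nle_mult_left[OF le(1)] x unfolding nat_less_def by simp
    qed
    show "is_lub (b * a) ((\<lambda>x. b * x) ` X)"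
      unfolding is_lub_def
    proof (intro conjI allI impI ballI)
      fix y assume "y \<in> (\<lambda>x. b * x) ` X"
      then obtain x where x: "x \<in> X" "y = b * x" by blast
      thus "nat_le y (b * a)" using X(2) nle_mult_left unfolding is_lub_def by blast
    next
      fix w assume w: "\<forall>y\<in>(\<lambda>x. b * x) ` X. nat_le y w"
      have "nat_le x (sinv b * w)" if "x \<in> X" for x
      proof -
        have "nat_le (sinv b * (b * x)) (sinv b * w)" using w that nle_mult_left by blast
        thus ?thesis using xid X(2) that unfolding is_lub_def by simp
      qed
      hence "nat_le a (sinv b * w)" using X(2) unfolding is_lub_def by blast
      hence "nat_le (b * a) (b * (sinv b * w))" by (rule nle_mult_left)
      moreover have "nat_le (b * (sinv b * w)) w"
        unfolding nat_le_def using idem_l[of b] by (metis mult.assoc)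
      ultimately show "nat_le (b * a) w" by (rule nle_trans)
    qed
  qed
qed

lemma ideal1_l_eq: "ideal1 (s * sinv s) = ideal1 (s::'a)"
  by (rule ideal1_eqI[OF ideal1_r]) (metis ideal1_r sinv1)

lemma ideal1_sinv: "ideal1 (sinv s) = ideal1 (s::'a)"
  by (rule ideal1_eqI) (metis ideal1_lr sinv2, metis ideal1_lr sinv1)

lemma ideal1_r_eq: "ideal1 (sinv s * s) = ideal1 (s::'a)"
  using ideal1_l_eq[of "sinv s"] by (simp add: sinv_sinv ideal1_sinv)

lemma J_transfer:
  assumes J: "ideal1 a = ideal1 (u::'a)" and jr: "join_reducible a"
  shows "join_reducible u"
proof -
  define e where "e = u * sinv u"
  define f where "f = a * sinv a"
  have "ideal1 e = ideal1 f" unfolding e_def f_def using J ideal1_l_eq by simp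
  then obtain y where y: "y * sinv y = e" "sinv y * y = f"
    using D_exists[OF idem_l idem_l] e_def f_def by metis
  define c where "c = y * a"
  have af: "a * sinv a = sinv y * y" using y(2) f_def by simp
  have jc: "join_reducible c" unfolding c_def by (rule transfer_left[OF jr af])
  have "c * sinv c = y * (a * sinv a) * sinv y" by (simp add: c_def sinv_mult mult.assoc)
  also have "\<dots> = y * (sinv y * y) * sinv y" by (simp only: af)
  also have "\<dots> = y * sinv y" by (simp add: mult.assoc sinv1x)
  finally have ce: "c * sinv c = e" using y(1) by simp
  define b where "b = sinv c * u"
  have ue: "u * sinv u = c * sinv c" using ce e_def by simp
  have "b * sinv b = sinv c * (u * sinv u) * c"
    by (simp add: b_def sinv_mult sinv_sinv mult.assoc)
  also have "\<dots> = sinv c * (c * sinv c) * c" by (simp only: ue)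
  also have "\<dots> = sinv c * c" by (simp add: mult.assoc sinv2x)
  finally have "join_reducible (c * b)" using transfer_right[OF jc] by simp
  moreover have "c * b = u" using ce by (simp add: b_def e_def flip: mult.assoc) (simp add: sinv1)
  ultimately show ?thesis by simp
qed


lemma Jclass_mem: "x \<in> Jclass s \<longleftrightarrow> ideal1 x = ideal1 (s::'a)"
  unfolding Jclass_def by simp

lemma is_JclassD: "is_Jclass J \<Longrightarrow> x \<in> J \<Longrightarrow> J = Jclass (x::'a)"
  unfolding is_Jclass_def Jclass_def by auto

lemma ideal1_set_J: "ideal1_set (Jclass s) = ideal1 (s::'a)"
  unfolding ideal1_set_def Jclass_def using ideal1_self by auto

lemma Jclass_eq: "Jclass x = Jclass y \<longleftrightarrow> ideal1 x = ideal1 (y::'a)"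
  unfolding Jclass_def by auto

lemma Jless_J: "Jless (Jclass x) (Jclass y) \<longleftrightarrow> ideal1 x \<subseteq> ideal1 y \<and> ideal1 x \<noteq> ideal1 (y::'a)"
  unfolding Jless_def ideal1_set_J Jclass_eq by simp

lemma low_ne:
  assumes "is_Jclass J'" "Jless J' (Jclass e)" "x \<in> J'"
  shows "sinv x * x * e \<noteq> (e::'a)"
proof
  assume h: "sinv x * x * e = e"
  have J': "J' = Jclass x" using assms is_JclassD by blast
  have "e \<in> ideal1 x" using h ideal1_lr[of "sinv x" x e] by simp
  hence "ideal1 e \<subseteq> ideal1 x" by (rule ideal1_sub)
  thus False using assms(2) unfolding J' Jless_J by blast
qed

lemma part2:
  assumes J: "is_Jclass J" and eJ: "e \<in> J" and ie: "idem (e::'a)"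
  shows "M_J J e = {g \<in> Hclass e. \<forall>f. nat_less f e \<longrightarrow> nat_less f g}"
proof -
  have Je: "J = Jclass e" using J eJ is_JclassD by blast
  have H: "e * g = g \<and> ideal1 g = ideal1 e" if "g \<in> Hclass e" for g
  proof -
    have r: "rideal1 g = rideal1 e" using that unfolding Hclass_def by simp
    have "g \<in> rideal1 e" using r unfolding rideal1_def by blast
    then obtain y where "g = e \<or> g = e * y" unfolding rideal1_def by blast
    hence 1: "e * g = g" and 2: "g \<in> ideal1 e"
      using ie ideal1_r ideal1_self by (auto simp: mult.assoc[symmetric] idem_eq)
    have "e \<in> rideal1 g" using r unfolding rideal1_def by blast
    hence "e \<in> ideal1 g" unfolding rideal1_def using ideal1_r ideal1_self by blast
    thus ?thesis using 1 2 ideal1_eqI by blast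
  qed
  have lowf: "Jless (Jclass f) J" if "nat_less f e" for f
  proof -
    have le: "nat_le f e" "f \<noteq> e" using that nat_less_def by auto
    have "f \<in> ideal1 e" using le(1) unfolding nat_le_def using ideal1_l by blast
    hence "ideal1 f \<subseteq> ideal1 e" by (rule ideal1_sub)
    moreover have "ideal1 f \<noteq> ideal1 e" using nle_Jeq le by blast
    ultimately show ?thesis unfolding Je Jless_J by simp
  qed
  show ?thesis
  proof (intro set_eqI iffI)
    fix g assume g: "g \<in> M_J J e"
    have gH: "g \<in> Hclass e" and rm: "\<And>J'. is_Jclass J' \<Longrightarrow> Jless J' J \<Longrightarrow> rm_equiv J' g e"
      using g unfolding M_J_def by auto
    have "nat_less f g" if fe: "nat_less f e" for f
    proof -
      have fi: "idem f" using fe nle_idem_below ie nat_less_def by blast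
      have r: "rm_equiv (Jclass f) g e" using rm lowf[OF fe] unfolding is_Jclass_def by blast
      have fJ: "f \<in> Jclass f" unfolding Jclass_def by simp
      have "f * e = f" using nle_idem[OF fi] fe nat_less_def by metis
      hence "f * g = f" using r fJ unfolding rm_equiv_def by metis
      hence "nat_le f g" using nle_idemI[OF fi] by simp
      moreover have "f \<noteq> g"
      proof
        assume "f = g"
        hence "ideal1 f = ideal1 e" using H[OF gH] by simp
        thus False using nle_Jeq fe nat_less_def by blast
      qed
      ultimately show ?thesis unfolding nat_less_def by simp
    qed
    thus "g \<in> {g \<in> Hclass e. \<forall>f. nat_less f e \<longrightarrow> nat_less f g}" using gH by blast
  next
    fix g assume "g \<in> {g \<in> Hclass e. \<forall>f. nat_less f e \<longrightarrow> nat_less f g}"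
    hence gH: "g \<in> Hclass e" and Hf: "\<And>f. nat_less f e \<Longrightarrow> nat_less f g" by auto
    have eg: "e * g = g" using H[OF gH] by simp
    have "rm_equiv J' g e" if J': "is_Jclass J'" "Jless J' J" for J'
    proof -
      have "x * g = x * e" if x: "x \<in> J'" for x
      proof -
        have fi: "idem (sinv x * x * e)" by (rule idem_mult[OF idem_r ie])
        have "nat_le (sinv x * x * e) e" unfolding nat_le_def using idem_r by blast
        moreover have "sinv x * x * e \<noteq> e" using low_ne[OF J'(1) _ x] J'(2) Je by simp
        ultimately have "nat_le (sinv x * x * e) g" using Hf nat_less_def by blast
        hence fg: "sinv x * x * e * g = sinv x * x * e" using nle_idem[OF fi] by metis
        have "x * g = x * (sinv x * x * e * g)" using eg by (simp add: mult.assoc sinv1x)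
        also have "\<dots> = x * (sinv x * x * e)" by (simp only: fg)
        also have "\<dots> = x * e" by (simp add: mult.assoc sinv1x)
        finally show ?thesis .
      qed
      thus ?thesis unfolding rm_equiv_def by simp
    qed
    thus "g \<in> M_J J e" using gH unfolding M_J_def by blast
  qed
qed


lemma rm_sym: "rm_equiv J s t \<Longrightarrow> rm_equiv J t (s::'a)"
  unfolding rm_equiv_def by metis

lemma part1_if:
  assumes J: "is_Jclass J" and ji: "\<forall>s\<in>J. join_irreducible (s::'a)"
  shows "RM_irreducible J"
proof -
  obtain s0 where J0: "J = Jclass s0" using J is_Jclass_def by blast
  define e where "e = s0 * sinv s0"
  have ie: "idem e" unfolding e_def by (rule idem_l)
  have eJ: "e \<in> J" unfolding J0 Jclass_mem e_def by (rule ideal1_l_eq)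
  have Je: "J = Jclass e" using J eJ is_JclassD by blast
  have njr: "\<not> join_reducible e" using ji eJ join_irreducible_def by blast
  have nl: "\<not> is_lub e {f. nat_less f e}"
  proof
    assume "is_lub e {f. nat_less f e}"
    hence "join_reducible e" unfolding join_reducible_def
      by (intro exI[of _ "{f. nat_less f e}"]) simp
    thus False using njr by simp
  qed
  have all: "\<forall>x\<in>{f. nat_less f e}. nat_le x e" unfolding nat_less_def by simp
  obtain w where w0: "\<forall>x\<in>{f. nat_less f e}. nat_le x w" and new: "\<not> nat_le e w"
    using nl all unfolding is_lub_def by blast
  have w: "\<And>f. nat_less f e \<Longrightarrow> nat_le f w" using w0 by simp
  define t where "t = e * w"
  have "\<not> rm_equiv J e t"
  proof
    assume "rm_equiv J e t"
    hence "e * e = e * t" using eJ ie unfolding rm_equiv_def by (metis idem_eq)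
    hence "e = e * (e * w)" using ie by (simp add: t_def idem_eq)
    hence "e = e * w" using idemx[OF ie] by metis
    thus False using new nle_idemI[OF ie] by blast
  qed
  moreover have "rm_equiv J' e t" if J': "is_Jclass J'" "Jless J' J" for J'
  proof -
    have "x * e = x * t" if x: "x \<in> J'" for x
    proof -
      have fi: "idem (sinv x * x * e)" by (rule idem_mult[OF idem_r ie])
      have "nat_le (sinv x * x * e) e" unfolding nat_le_def using idem_r by blast
      moreover have "sinv x * x * e \<noteq> e" using low_ne[OF J'(1) _ x] J'(2) Je by simp
      ultimately have "nat_le (sinv x * x * e) w" using w nat_less_def by blast
      hence fw: "sinv x * x * e * w = sinv x * x * e" using nle_idem[OF fi] by metis
      have "x * t = x * (sinv x * x * e * w)" by (simp add: t_def mult.assoc sinv1x)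
      also have "\<dots> = x * (sinv x * x * e)" by (simp only: fw)
      also have "\<dots> = x * e" by (simp add: mult.assoc sinv1x)
      finally show ?thesis by simp
    qed
    thus ?thesis unfolding rm_equiv_def by simp
  qed
  ultimately show ?thesis unfolding RM_irreducible_def by blast
qed

lemma find_u:
  assumes Jx: "J = Jclass x" and xs: "x * s \<in> J" and xt: "x * t \<notin> J \<or> x * t \<noteq> x * (s::'a)"
  shows "\<exists>u\<in>J. nat_le u s \<and> \<not> nat_le u t"
proof -
  define u where "u = sinv x * x * s"
  have xsx: "ideal1 (x * s) = ideal1 x" using xs Jx Jclass_mem by blast
  have "ideal1 u = ideal1 (x * s)"
  proof (rule ideal1_eqI)
    show "u \<in> ideal1 (x * s)" using ideal1_l[of "sinv x" "x * s"] by (simp add: u_def mult.assoc)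
    show "x * s \<in> ideal1 u" using ideal1_l[of x u] by (simp add: u_def mult.assoc sinv1x)
  qed
  hence uJ: "u \<in> J" using xs Jx Jclass_mem by simp
  have "u * sinv u = sinv x * (x * s * sinv (x * s)) * x"
    by (simp add: u_def sinv_mult idem_sinv[OF idem_r] sinv_sinv mult.assoc)
  also have "\<dots> = sinv x * x" using Rstab[OF xsx] by (simp add: mult.assoc sinv2x)
  finally have uu: "u * sinv u = sinv x * x" .
  have "nat_le u s" unfolding u_def nat_le_def using idem_r by blast
  moreover have "\<not> nat_le u t"
  proof
    assume "nat_le u t"
    hence "u = sinv x * x * t" using uu nle_iff by metis
    hence "x * t = x * u" by (simp add: mult.assoc sinv1x)
    also have "\<dots> = x * s" by (simp add: u_def mult.assoc sinv1x)
    finally show False using xt xs by simp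
  qed
  ultimately show ?thesis using uJ by blast
qed

lemma u_ji:
  assumes Ju: "J = Jclass u" and up: "nat_le u p" and uq: "\<not> nat_le u (q::'a)"
    and low: "\<And>J'. is_Jclass J' \<Longrightarrow> Jless J' J \<Longrightarrow> rm_equiv J' p q"
  shows "join_irreducible u"
  unfolding join_irreducible_def
proof
  assume "join_reducible u"
  then obtain X where X: "\<forall>x\<in>X. nat_less x u" "is_lub u X" unfolding join_reducible_def by blast
  have "nat_le v q" if vX: "v \<in> X" for v
  proof -
    have vu: "nat_le v u" "v \<noteq> u" using X(1) vX nat_less_def by auto
    have "v \<in> ideal1 u" using vu(1) unfolding nat_le_def using ideal1_l by blast
    hence "ideal1 v \<subseteq> ideal1 u" by (rule ideal1_sub)
    moreover have "ideal1 v \<noteq> ideal1 u" using nle_Jeq vu by blast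
    ultimately have "Jless (Jclass v) J" unfolding Ju Jless_J by simp
    hence r: "rm_equiv (Jclass v) p q" using low unfolding is_Jclass_def by blast
    have vp: "nat_le v p" using nle_trans vu(1) up by blast
    have "sinv v \<in> Jclass v" unfolding Jclass_mem by (rule ideal1_sinv)
    moreover have "sinv v * p \<in> Jclass v"
      unfolding nle_sinv_mult[OF vp] Jclass_mem by (rule ideal1_r_eq)
    ultimately have "sinv v * q = sinv v * p" using r unfolding rm_equiv_def by metis
    hence "sinv v * q = sinv v * v" using nle_sinv_mult[OF vp] by simp
    hence "v = v * sinv v * q" by (simp add: mult.assoc sinv1')
    thus ?thesis using nle_iff by blast
  qed
  hence "nat_le u q" using X(2) unfolding is_lub_def by blast
  thus False using uq by simp
qed

lemma part1_only_if:
  assumes J: "is_Jclass J" and rm: "RM_irreducible J" and aJ: "(a::'a) \<in> J"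
  shows "join_irreducible a"
proof -
  obtain s t where low: "\<And>J'. is_Jclass J' \<Longrightarrow> Jless J' J \<Longrightarrow> rm_equiv J' s t"
    and nrm: "\<not> rm_equiv J s t" using rm unfolding RM_irreducible_def by blast
  obtain x where xJ: "x \<in> J" and
    bad: "\<not> ((x * s \<in> J \<longleftrightarrow> x * t \<in> J) \<and> (x * s \<in> J \<and> x * t \<in> J \<longrightarrow> x * s = x * t))"
    using nrm unfolding rm_equiv_def by blast
  have Jx: "J = Jclass x" using J xJ is_JclassD by blast
  obtain u where uJ: "u \<in> J" and ji: "join_irreducible u"
  proof (cases "x * s \<in> J")
    case True
    hence "x * t \<notin> J \<or> x * t \<noteq> x * s" using bad by auto
    then obtain u where "u \<in> J" "nat_le u s" "\<not> nat_le u t" using find_u[OF Jx True] by blast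
    moreover have "J = Jclass u" using J \<open>u \<in> J\<close> is_JclassD by blast
    ultimately show ?thesis using that u_ji low by blast
  next
    case False
    hence xt: "x * t \<in> J" using bad by auto
    hence "x * s \<notin> J \<or> x * s \<noteq> x * t" using False by auto
    then obtain u where "u \<in> J" "nat_le u t" "\<not> nat_le u s" using find_u[OF Jx xt] by blast
    moreover have "J = Jclass u" using J \<open>u \<in> J\<close> is_JclassD by blast
    ultimately show ?thesis using that u_ji[of J u t s] low rm_sym by blast
  qed
  have "ideal1 a = ideal1 u" using J aJ uJ is_JclassD Jclass_mem by metis
  thus ?thesis using J_transfer ji unfolding join_irreducible_def by blast
qed

end

theorem proposition2p12:
  assumes "inverse_semigroup_ax TYPE('a::{finite,semigroup_mult})"
  shows "(\<forall>J::'a set. is_Jclass J \<longrightarrow>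
            (RM_irreducible J \<longleftrightarrow> (\<forall>s\<in>J. join_irreducible s)))
       \<and> (\<forall>(J::'a set) e. is_Jclass J \<and> e \<in> J \<and> idem e \<longrightarrow>
            M_J J e = {g \<in> Hclass e. \<forall>f. nat_less f e \<longrightarrow> nat_less f g})"
proof -
  interpret invsg "TYPE('a)" by unfold_locales (rule assms)
  show ?thesis using part1_if part1_only_if part2 by blast
qed

end
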